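(* Let $\Sigma$ be a finite set with at least two elements and $L\subseteq T_\Sigma^\omega$ a tree language accepted by some Büchi tree automaton. Then there is a set $C\subseteq T_\Sigma^\omega\times\mathbb{T}_\infty$, closed in $T_\Sigma^\omega\times\mathbb{T}_\infty$ (for the Cantor topology), accepted by some Büchi tree automaton as a subset of $T_{\Sigma\times2}^\omega$ identified with $T_\Sigma^\omega\times T_2^\omega$, and such that $L=\pi_0[C]$.
   Context: $T_\Sigma^\omega$ is the set of maps $\{l,r\}^*\to\Sigma$ with the Cantor topology (distance $2^{-n}$, $n$ least length of a node where the trees differ). A Büchi tree automaton is $\mathcal{A}=(\Sigma,Q,q_0,Q_f,\Delta)$ with finite $Q$, $q_0\in Q$, $Q_f\subseteq Q$, $\Delta\subseteq Q\times\Sigma\times Q\times Q$; a run on $t$ is $\rho:\{l,r\}^*\to Q$ with $\rho(\lambda)=q_0$ ($\lambda$ the root) and $(\rho(u),t(u),\rho(ul),\rho(ur))\in\Delta$ for all $u$; it is accepting if every path of $\rho$ visits $Q_f$ infinitely often; $L(\mathcal{A})$ is the set of trees with an accepting run. A path is the sequence of labels along an infinite branch from the root. $\mathbb{T}_\infty$ is the set of $t\in T_{\{0,1\}}^\omega$ every path of which has infinitely many $1$'s. $\pi_0$ is the first projection. *)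

theory Defs
  imports Main "HOL-Library.Cardinality"
begin

datatype dir = Ldir | Rdir

type_synonym 'a tree = "dir list \<Rightarrow> 'a"

definition branch_node :: "(nat \<Rightarrow> dir) \<Rightarrow> nat \<Rightarrow> dir list" where
  "branch_node beta n = map beta [0..<n]"

text \<open>Buechi tree automaton over the alphabet given by the type 'a
  (states are drawn from nat; any finite state set can be renamed into nat).\<close>
record 'a bta =
  states :: "nat set"
  init :: nat
  final :: "nat set"
  trans :: "(nat \<times> 'a \<times> nat \<times> nat) set"

definition bta_wf :: "'a bta \<Rightarrow> bool" where
  "bta_wf A \<longleftrightarrow> finite (states A) \<and> init A \<in> states A \<and> final A \<subseteq> states A
     \<and> trans A \<subseteq> states A \<times> UNIV \<times> states A \<times> states A"

definition is_run :: "'a bta \<Rightarrow> 'a tree \<Rightarrow> nat tree \<Rightarrow> bool" where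
  "is_run A t \<rho> \<longleftrightarrow> \<rho> [] = init A \<and>
     (\<forall>u. (\<rho> u, t u, \<rho> (u @ [Ldir]), \<rho> (u @ [Rdir])) \<in> trans A)"

definition accepting_run :: "'a bta \<Rightarrow> nat tree \<Rightarrow> bool" where
  "accepting_run A \<rho> \<longleftrightarrow> (\<forall>beta. \<exists>\<^sub>\<infinity>n. \<rho> (branch_node beta n) \<in> final A)"

definition bta_lang :: "'a bta \<Rightarrow> 'a tree set" where
  "bta_lang A = {t. \<exists>\<rho>. is_run A t \<rho> \<and> accepting_run A \<rho>}"

definition T_inf :: "bool tree set" where
  "T_inf = {t. \<forall>beta. \<exists>\<^sub>\<infinity>n. t (branch_node beta n)}"

definition pair_tree :: "'a tree \<Rightarrow> 'b tree \<Rightarrow> ('a \<times> 'b) tree" where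
  "pair_tree t s = (\<lambda>u. (t u, s u))"

text \<open>Closedness of C inside the subspace S of T_Sigma x T_2 for the product of the
  Cantor topologies: every point of S that is a limit of points of C lies in C.
  (Distance < 2^-n iff the trees agree on all nodes of length at most n.)\<close>
definition agree_upto :: "nat \<Rightarrow> 'a tree \<Rightarrow> 'a tree \<Rightarrow> bool" where
  "agree_upto n x y \<longleftrightarrow> (\<forall>u. length u \<le> n \<longrightarrow> x u = y u)"

definition closed_in_sub :: "('a tree \<times> 'b tree) set \<Rightarrow> ('a tree \<times> 'b tree) set \<Rightarrow> bool" where
  "closed_in_sub S C \<longleftrightarrow> C \<subseteq> S \<and>
     (\<forall>x\<in>S. (\<forall>n. \<exists>y\<in>C. agree_upto n (fst y) (fst x) \<and> agree_upto n (snd y) (snd x)) \<longrightarrow> x \<in> C)"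

end

theory Submission imports Defs "HOL-Library.Infinite_Set" begin

lemma dir_cases2: "x = Ldir \<or> x = Rdir"
  by (cases x) simp_all

lemma dir_UNIV: "(UNIV::dir set) = {Ldir, Rdir}"
  using dir_cases2 by blast

lemma finite_dirs: "finite (UNIV::dir set)"
  by (simp add: dir_UNIV)


lemma INFM_Suc_iff: "(\<exists>\<^sub>\<infinity>n. P (Suc n)) \<longleftrightarrow> (\<exists>\<^sub>\<infinity>n. P n)"
  unfolding frequently_def by (rule arg_cong[of _ _ Not]) (rule MOST_Suc_iff)

lemma koenig:
  fixes Q :: "nat set" and R :: "dir list \<Rightarrow> (dir list \<Rightarrow> nat) \<Rightarrow> bool"
  assumes fin: "finite Q"
    and loc: "\<And>u \<rho> \<rho>'. (\<And>v. length v \<le> Suc (length u) \<Longrightarrow> \<rho> v = \<rho>' v) \<Longrightarrow> R u \<rho> = R u \<rho>'"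
    and approx: "\<And>n. \<exists>\<rho>. (\<forall>u. \<rho> u \<in> Q) \<and> (\<forall>u. length u < n \<longrightarrow> R u \<rho>)"
  shows "\<exists>\<rho>. \<forall>u. R u \<rho>"
proof -
  define eq where "eq n \<rho> \<rho>' \<longleftrightarrow> (\<forall>v::dir list. length v < n \<longrightarrow> \<rho> v = (\<rho>' v::nat))" for n \<rho> \<rho>'
  define good where "good n \<rho> \<longleftrightarrow> (\<forall>m. \<exists>\<rho>'. (\<forall>u. \<rho>' u \<in> Q) \<and> (\<forall>u. length u < m \<longrightarrow> R u \<rho>') \<and> eq n \<rho> \<rho>')" for n \<rho>
  have step: "\<exists>\<rho>'. good (Suc n) \<rho>' \<and> eq n \<rho> \<rho>'" if g: "good n \<rho>" for n \<rho>
  proof -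
    from g obtain f where f: "\<And>m. (\<forall>u. f m u \<in> Q) \<and> (\<forall>u. length u < m \<longrightarrow> R u (f m)) \<and> eq n \<rho> (f m)"
      unfolding good_def by metis
    define r where "r h = (\<lambda>v. if length v < Suc n then h v else 0::nat)" for h :: "dir list \<Rightarrow> nat"
    let ?A = "{v::dir list. length v < Suc n}"
    have finA: "finite ?A"
      using finite_lists_length_le[OF finite_dirs, of n] by (simp add: less_Suc_eq_le)
    have "r ` (f ` UNIV) \<subseteq> {h. \<forall>x. (x \<in> ?A \<longrightarrow> h x \<in> Q) \<and> (x \<notin> ?A \<longrightarrow> h x = 0)}"
      using f by (auto simp: r_def)
    hence "finite ((r \<circ> f) ` UNIV)"
      using finite_subset[OF _ finite_set_of_finite_funs[OF finA fin]] by (simp add: image_comp)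
    then obtain m0 where m0: "infinite {m. (r \<circ> f) m = (r \<circ> f) m0}"
      using pigeonhole_infinite[of "UNIV::nat set" "r \<circ> f"] by auto
    have "good (Suc n) (f m0)"
      unfolding good_def
    proof
      fix m
      obtain m' where m': "m' \<ge> m" "r (f m') = r (f m0)"
        using m0 unfolding infinite_nat_iff_unbounded_le by auto
      have "eq (Suc n) (f m0) (f m')"
        unfolding eq_def proof (intro allI impI)
        fix v :: "dir list" assume "length v < Suc n"
        then show "f m0 v = f m' v" using fun_cong[OF m'(2), of v] by (simp add: r_def)
      qed
      thus "\<exists>\<rho>'. (\<forall>u. \<rho>' u \<in> Q) \<and> (\<forall>u. length u < m \<longrightarrow> R u \<rho>') \<and> eq (Suc n) (f m0) \<rho>'"
        using f[of m'] m'(1) by (meson less_le_trans)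
    qed
    thus ?thesis using f by blast
  qed
  define g where "g = rec_nat (\<lambda>_. 0::nat) (\<lambda>n h. SOME h'. good (Suc n) h' \<and> eq n h h')"
  have g0: "g 0 = (\<lambda>_. 0)" and gS: "g (Suc n) = (SOME h'. good (Suc n) h' \<and> eq n (g n) h')" for n
    by (simp_all add: g_def)
  have gg: "good n (g n) \<and> eq n (g n) (g (Suc n))" for n
  proof (induction n)
    case 0
    have "good 0 (g 0)" using approx unfolding good_def eq_def by auto
    then show ?case using someI_ex[OF step[of 0 "g 0"]] gS[of 0] by auto
  next
    case (Suc n)
    have "good (Suc n) (g (Suc n))" using someI_ex[OF step[of n "g n"]] Suc gS[of n] by auto
    then show ?case using someI_ex[OF step[of "Suc n" "g (Suc n)"]] gS[of "Suc n"] by auto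
  qed
  have mono: "eq n (g n) (g (n + k))" for n k
  proof (induction k)
    case 0 then show ?case by (simp add: eq_def)
  next
    case (Suc k)
    then show ?case using gg[of "n+k"] by (simp add: eq_def)
  qed
  have agree: "g (Suc (length v)) v = g k v" if lt: "length v < k" for v k
  proof -
    obtain j where j: "k = Suc (length v) + j" using less_imp_Suc_add[OF lt] by auto
    have "eq (Suc (length v)) (g (Suc (length v))) (g k)" using mono[of "Suc (length v)" j] j by simp
    thus ?thesis unfolding eq_def by blast
  qed
  define \<rho> where "\<rho> u = g (Suc (length u)) u" for u
  have "R u \<rho>" for u
  proof -
    let ?k = "Suc (Suc (length u))"
    obtain \<rho>' where \<rho>': "\<forall>u'. length u' < Suc (length u) \<longrightarrow> R u' \<rho>'" "eq ?k (g ?k) \<rho>'"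
      using gg[of ?k] unfolding good_def by (metis (no_types))
    have "R u \<rho> = R u \<rho>'"
    proof (rule loc)
      fix v :: "dir list" assume "length v \<le> Suc (length u)"
      hence "length v < ?k" by simp
      thus "\<rho> v = \<rho>' v" using agree[of v ?k] \<rho>'(2) by (simp add: \<rho>_def eq_def)
    qed
    thus ?thesis using \<rho>'(1) by simp
  qed
  thus ?thesis by blast
qed


definition bitn :: "bool \<Rightarrow> nat" where "bitn b = (if b then 1 else 0)"

lemma bn_Suc: "branch_node beta (Suc n) = branch_node beta n @ [beta n]"
  by (simp add: branch_node_def)

lemma run_states:
  fixes A :: "'a bta" and t :: "'a tree" and \<rho> :: "nat tree" and u :: "dir list"
  shows "bta_wf A \<Longrightarrow> is_run A t \<rho> \<Longrightarrow> \<rho> u \<in> states A"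
  unfolding bta_wf_def is_run_def by blast

theorem lemma4p2:
  fixes L :: "('a::finite) tree set" and A :: "'a bta"
  assumes "CARD('a) \<ge> 2"
    and "bta_wf A" and "L = bta_lang A"
  shows "\<exists>C :: ('a tree \<times> bool tree) set.
           C \<subseteq> UNIV \<times> T_inf
         \<and> closed_in_sub (UNIV \<times> T_inf) C
         \<and> (\<exists>B :: ('a \<times> bool) bta. bta_wf B \<and> bta_lang B = (\<lambda>(t, s). pair_tree t s) ` C)
         \<and> L = fst ` C"
proof -
  note wf = assms(2)
  define C :: "('a tree \<times> bool tree) set" where
    "C = {(t,s). s \<in> T_inf \<and> (\<exists>\<rho>. is_run A t \<rho> \<and> (\<forall>u. s u \<longrightarrow> \<rho> u \<in> final A))}"
  have sub: "C \<subseteq> UNIV \<times> T_inf" by (auto simp: C_def)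
  have closed: "closed_in_sub (UNIV \<times> T_inf) C"
    unfolding closed_in_sub_def
  proof (intro conjI sub ballI impI)
    fix x assume "x \<in> (UNIV \<times> T_inf :: ('a tree \<times> bool tree) set)"
      and apx: "\<forall>n. \<exists>y\<in>C. agree_upto n (fst y) (fst x) \<and> agree_upto n (snd y) (snd x)"
    obtain t s where x: "x = (t,s)" and sT: "s \<in> T_inf" using \<open>x \<in> _\<close> by auto
    define R where "R u \<rho> \<longleftrightarrow> (u = [] \<longrightarrow> \<rho> [] = init A) \<and>
       (\<rho> u, t u, \<rho> (u @ [Ldir]), \<rho> (u @ [Rdir])) \<in> trans A \<and> (s u \<longrightarrow> \<rho> u \<in> final A)"
      for u :: "dir list" and \<rho> :: "nat tree"
    have "\<exists>\<rho>. \<forall>u. R u \<rho>"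
    proof (rule koenig[where Q = "states A"])
      show "finite (states A)" using wf by (simp add: bta_wf_def)
    next
      fix u :: "dir list" and \<rho> \<rho>' :: "nat tree"
      assume h: "\<And>v. length v \<le> Suc (length u) \<Longrightarrow> \<rho> v = \<rho>' v"
      have "\<rho> [] = \<rho>' []" "\<rho> u = \<rho>' u" "\<rho> (u @ [Ldir]) = \<rho>' (u @ [Ldir])"
        "\<rho> (u @ [Rdir]) = \<rho>' (u @ [Rdir])" by (auto intro!: h)
      then show "R u \<rho> = R u \<rho>'" unfolding R_def by simp
    next
      fix n
      obtain y where y: "y \<in> C" "agree_upto n (fst y) t" "agree_upto n (snd y) s"
        using spec[OF apx, of n] x by auto
      obtain t' s' where y': "y = (t', s')" by (cases y)
      obtain \<rho> where r: "is_run A t' \<rho>" "\<forall>u. s' u \<longrightarrow> \<rho> u \<in> final A"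
        using y(1) y' by (auto simp: C_def)
      have "\<forall>u. \<rho> u \<in> states A" using run_states[OF wf r(1)] by blast
      moreover have "\<forall>u. length u < n \<longrightarrow> R u \<rho>"
      proof (intro allI impI)
        fix u :: "dir list" assume "length u < n"
        hence "t' u = t u" "s' u = s u" using y(2,3) y' by (auto simp: agree_upto_def)
        thus "R u \<rho>" using r unfolding R_def is_run_def by metis
      qed
      ultimately show "\<exists>\<rho>. (\<forall>u. \<rho> u \<in> states A) \<and> (\<forall>u. length u < n \<longrightarrow> R u \<rho>)" by blast
    qed
    then obtain \<rho> where "\<forall>u. R u \<rho>" by blast
    hence "is_run A t \<rho>" "\<forall>u. s u \<longrightarrow> \<rho> u \<in> final A"
      unfolding R_def is_run_def by auto
    thus "x \<in> C" using x sT by (auto simp: C_def)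
  qed
  define B :: "('a \<times> bool) bta" where
    "B = \<lparr>states = (\<lambda>(q,f). 2*q+f) ` (states A \<times> {0,1}), init = 2 * init A,
          final = (\<lambda>q. 2*q+1) ` states A,
          trans = {(2*q+f, (a,b), 2*q1 + bitn b, 2*q2 + bitn b) | q f a b q1 q2.
                      (q,a,q1,q2) \<in> trans A \<and> f \<in> {0,1} \<and> (b \<longrightarrow> q \<in> final A)}\<rparr>"
  have memB: "(p, (a,b), p1, p2) \<in> trans B \<longleftrightarrow> (\<exists>q f q1 q2. p = 2*q+f \<and> p1 = 2*q1+bitn b \<and> p2 = 2*q2+bitn b \<and> (q,a,q1,q2)\<in>trans A \<and> f\<in>{0,1} \<and> (b \<longrightarrow> q\<in>final A))"
    for p a b p1 p2
    unfolding B_def by (simp only: bta.select_convs mem_Collect_eq prod.inject) blast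
  have finB: "final B = (\<lambda>q. 2*q+1) ` states A" and initB: "init B = 2 * init A"
    by (simp_all add: B_def)
  have wfB: "bta_wf B"
    using wf unfolding bta_wf_def B_def
    by (auto simp: bitn_def image_iff) (force+)
  have langB: "bta_lang B = (\<lambda>(t, s). pair_tree t s) ` C"
  proof
    show "bta_lang B \<subseteq> (\<lambda>(t, s). pair_tree t s) ` C"
    proof
      fix x assume "x \<in> bta_lang B"
      then obtain \<sigma> where run: "is_run B x \<sigma>" and acc: "accepting_run B \<sigma>"
        unfolding bta_lang_def by blast
      define t where "t = (\<lambda>u. fst (x u))"
      define s where "s = (\<lambda>u. snd (x u))"
      have x: "x = pair_tree t s" by (simp add: pair_tree_def t_def s_def)
      define \<rho> where "\<rho> u = \<sigma> u div 2" for u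
      have loc: "(\<rho> u, t u, \<rho> (u @ [Ldir]), \<rho> (u @ [Rdir])) \<in> trans A \<and> (s u \<longrightarrow> \<rho> u \<in> final A)
          \<and> \<sigma> (u @ [Ldir]) mod 2 = bitn (s u) \<and> \<sigma> (u @ [Rdir]) mod 2 = bitn (s u)" for u
      proof -
        have "(\<sigma> u, x u, \<sigma> (u @ [Ldir]), \<sigma> (u @ [Rdir])) \<in> trans B"
          using run unfolding is_run_def by blast
        moreover have "x u = (t u, s u)" unfolding t_def s_def by (rule prod.collapse[symmetric])
        ultimately have "(\<sigma> u, (t u, s u), \<sigma> (u @ [Ldir]), \<sigma> (u @ [Rdir])) \<in> trans B" by simp
        then obtain q f q1 q2 where h: "\<sigma> u = 2*q+f" "f \<in> {0,1}" "\<sigma> (u @ [Ldir]) = 2*q1 + bitn (s u)"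
          "\<sigma> (u @ [Rdir]) = 2*q2 + bitn (s u)" "(q, t u, q1, q2) \<in> trans A" "s u \<longrightarrow> q \<in> final A"
          unfolding memB by blast
        have "\<rho> u = q" "\<rho> (u @ [Ldir]) = q1" "\<rho> (u @ [Rdir]) = q2"
          using h by (auto simp: \<rho>_def bitn_def)
        thus ?thesis using h by (auto simp: bitn_def)
      qed
      have "is_run A t \<rho>"
        unfolding is_run_def using loc run by (simp add: \<rho>_def is_run_def initB)
      moreover have "s \<in> T_inf"
        unfolding T_inf_def
      proof (intro CollectI allI)
        fix beta
        have "\<exists>\<^sub>\<infinity>n. \<sigma> (branch_node beta (Suc n)) \<in> final B"
          using acc INFM_Suc_iff[of "\<lambda>n. \<sigma> (branch_node beta n) \<in> final B"]
          unfolding accepting_run_def by blast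
        thus "\<exists>\<^sub>\<infinity>n. s (branch_node beta n)"
        proof (rule INFM_mono)
          fix n assume "\<sigma> (branch_node beta (Suc n)) \<in> final B"
          then obtain q where q: "\<sigma> (branch_node beta n @ [beta n]) = 2*q+1"
            unfolding bn_Suc finB by auto
          have "\<sigma> (branch_node beta n @ [beta n]) mod 2 = bitn (s (branch_node beta n))"
            using loc by (cases "beta n") auto
          hence "bitn (s (branch_node beta n)) = 1" using q by simp
          thus "s (branch_node beta n)" by (simp add: bitn_def split: if_splits)
        qed
      qed
      ultimately have "(t, s) \<in> C" using loc unfolding C_def by blast
      thus "x \<in> (\<lambda>(t, s). pair_tree t s) ` C" using x by force
    qed
  next
    show "(\<lambda>(t, s). pair_tree t s) ` C \<subseteq> bta_lang B"
    proof
      fix x assume "x \<in> (\<lambda>(t, s). pair_tree t s) ` C"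
      then obtain t s \<rho> where x: "x = pair_tree t s" and sT: "s \<in> T_inf" and r: "is_run A t \<rho>"
        and fin: "\<forall>u. s u \<longrightarrow> \<rho> u \<in> final A"
        unfolding C_def by auto
      define \<sigma> where "\<sigma> u = 2 * \<rho> u + (if u = [] then 0 else bitn (s (butlast u)))" for u
      have "is_run B x \<sigma>"
        unfolding is_run_def
      proof (intro conjI allI)
        show "\<sigma> [] = init B" using r by (simp add: \<sigma>_def initB is_run_def)
      next
        fix u
        have tr: "(\<rho> u, t u, \<rho> (u @ [Ldir]), \<rho> (u @ [Rdir])) \<in> trans A" using r by (simp add: is_run_def)
        define f where "f = (if u = [] then 0 else bitn (s (butlast u)))"
        have "f \<in> {0,1}" by (simp add: f_def bitn_def)
        have "(\<sigma> u, x u, \<sigma> (u @ [Ldir]), \<sigma> (u @ [Rdir])) =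
            (2 * \<rho> u + f, (t u, s u), 2 * \<rho> (u @ [Ldir]) + bitn (s u), 2 * \<rho> (u @ [Rdir]) + bitn (s u))"
          by (simp add: \<sigma>_def f_def x pair_tree_def)
        moreover have "(2 * \<rho> u + f, (t u, s u), 2 * \<rho> (u @ [Ldir]) + bitn (s u), 2 * \<rho> (u @ [Rdir]) + bitn (s u)) \<in> trans B"
          unfolding memB using tr \<open>f \<in> {0,1}\<close> fin by blast
        ultimately show "(\<sigma> u, x u, \<sigma> (u @ [Ldir]), \<sigma> (u @ [Rdir])) \<in> trans B" by simp
      qed
      moreover have "accepting_run B \<sigma>"
        unfolding accepting_run_def
      proof
        fix beta
        have "\<exists>\<^sub>\<infinity>n. s (branch_node beta n)" using sT unfolding T_inf_def by blast
        hence "\<exists>\<^sub>\<infinity>n. \<sigma> (branch_node beta (Suc n)) \<in> final B"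
        proof (rule INFM_mono)
          fix n assume "s (branch_node beta n)"
          moreover have "\<rho> (branch_node beta n @ [beta n]) \<in> states A" using run_states[OF wf r] .
          ultimately show "\<sigma> (branch_node beta (Suc n)) \<in> final B"
            unfolding bn_Suc finB by (auto simp: \<sigma>_def bitn_def)
        qed
        thus "\<exists>\<^sub>\<infinity>n. \<sigma> (branch_node beta n) \<in> final B"
          using INFM_Suc_iff[of "\<lambda>n. \<sigma> (branch_node beta n) \<in> final B"] by blast
      qed
      ultimately show "x \<in> bta_lang B" unfolding bta_lang_def by blast
    qed
  qed
  have proj: "L = fst ` C"
  proof
    show "L \<subseteq> fst ` C"
    proof
      fix t assume "t \<in> L"
      then obtain \<rho> where r: "is_run A t \<rho>" and acc: "accepting_run A \<rho>"
        using assms(3) unfolding bta_lang_def by blast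
      define s where "s u = (\<rho> u \<in> final A)" for u
      have "s \<in> T_inf" using acc unfolding T_inf_def accepting_run_def s_def by blast
      hence "(t, s) \<in> C" using r unfolding C_def s_def by blast
      thus "t \<in> fst ` C" by force
    qed
  next
    show "fst ` C \<subseteq> L"
    proof
      fix t assume "t \<in> fst ` C"
      then obtain s \<rho> where sT: "s \<in> T_inf" and r: "is_run A t \<rho>" and fin: "\<forall>u. s u \<longrightarrow> \<rho> u \<in> final A"
        unfolding C_def by auto
      have "accepting_run A \<rho>"
        unfolding accepting_run_def
      proof
        fix beta
        have "\<exists>\<^sub>\<infinity>n. s (branch_node beta n)" using sT unfolding T_inf_def by blast
        thus "\<exists>\<^sub>\<infinity>n. \<rho> (branch_node beta n) \<in> final A" by (rule INFM_mono) (use fin in blast)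
      qed
      thus "t \<in> L" using r assms(3) unfolding bta_lang_def by blast
    qed
  qed
  have "\<exists>B :: ('a \<times> bool) bta. bta_wf B \<and> bta_lang B = (\<lambda>(t, s). pair_tree t s) ` C"
    using wfB langB by blast
  with sub closed proj show ?thesis by (intro exI[of _ C] conjI)
qed

end
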